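(* Let $a_1,a_2,b$ be nonzero real numbers and $q\in[1,+\infty)$. Consider the scalar control system $$y(t)=a_1y(t-1)+a_2y(t-\pi)+\int_0^{\pi}y(t-\tau)\,d\tau+bu(t),\qquad t\ge0.$$ Then this system is $L^q$ approximately controllable in time $T$ for every $T>2\pi$.
   Context: For $T\ge 0$, $\phi\in L^q([-\pi,0],\mathbb{R})$ and $u\in L^q([0,T],\mathbb{R})$ there is a unique $y\in L^q([-\pi,T],\mathbb{R})$ equal to $\phi$ on $[-\pi,0]$ and satisfying the equation a.e. on $[0,T]$; $y_t(\theta):=y(t+\theta)$ for $\theta\in[-\pi,0]$. The system is $L^q$ approximately controllable in time $T>0$ if for every $\phi,\psi\in L^q([-\pi,0],\mathbb{R})$ and $\epsilon>0$ there exists $u\in L^q([0,T],\mathbb{R})$ with $\|y_T-\psi\|_{L^q([-\pi,0])}<\epsilon$. *)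

theory Defs
  imports "HOL-Analysis.Analysis"
begin

definition Lq_on :: "real \<Rightarrow> real set \<Rightarrow> (real \<Rightarrow> real) \<Rightarrow> bool" where
  "Lq_on q A f \<longleftrightarrow> set_borel_measurable lebesgue A f \<and>
                     set_integrable lebesgue A (\<lambda>x. \<bar>f x\<bar> powr q)"

definition Lq_norm :: "real \<Rightarrow> real set \<Rightarrow> (real \<Rightarrow> real) \<Rightarrow> real" where
  "Lq_norm q A f = (set_lebesgue_integral lebesgue A (\<lambda>x. \<bar>f x\<bar> powr q)) powr (1 / q)"

definition is_solution ::
  "real \<Rightarrow> real \<Rightarrow> real \<Rightarrow> real \<Rightarrow> real \<Rightarrow> (real \<Rightarrow> real) \<Rightarrow> (real \<Rightarrow> real) \<Rightarrow> (real \<Rightarrow> real) \<Rightarrow> bool"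
  where
  "is_solution q a1 a2 b T phi u y \<longleftrightarrow>
     Lq_on q {-pi..T} y \<and>
     (\<forall>t\<in>{-pi..0}. y t = phi t) \<and>
     (AE t in lebesgue. t \<in> {0..T} \<longrightarrow>
        y t = a1 * y (t - 1) + a2 * y (t - pi)
              + set_lebesgue_integral lebesgue {0..pi} (\<lambda>\<tau>. y (t - \<tau>)) + b * u t)"

definition Lq_approx_controllable ::
  "real \<Rightarrow> real \<Rightarrow> real \<Rightarrow> real \<Rightarrow> real \<Rightarrow> bool" where
  "Lq_approx_controllable q a1 a2 b T \<longleftrightarrow>
     (\<forall>phi psi \<epsilon>. Lq_on q {-pi..0} phi \<longrightarrow> Lq_on q {-pi..0} psi \<longrightarrow> \<epsilon> > 0 \<longrightarrow>
        (\<exists>u. Lq_on q {0..T} u \<and>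
             (\<exists>y. is_solution q a1 a2 b T phi u y) \<and>
             (\<forall>y. is_solution q a1 a2 b T phi u y \<longrightarrow>
                  Lq_norm q {-pi..0} (\<lambda>\<theta>. y (T + \<theta>) - psi \<theta>) < \<epsilon>)))"

end

theory Submission
  imports Defs
begin

lemma Lq_UNIV_iff:
  "Lq_on q UNIV f \<longleftrightarrow> f \<in> borel_measurable lebesgue \<and> integrable lebesgue (\<lambda>x. \<bar>f x\<bar> powr q)"
  by (simp add: Lq_on_def set_borel_measurable_def set_integrable_def)

lemma Lq_cong:
  assumes "Lq_on q A f" "\<And>x. x \<in> A \<Longrightarrow> f x = g x"
  shows "Lq_on q A g"
proof -
  have e1: "(\<lambda>x. indicator A x *\<^sub>R f x) = (\<lambda>x. indicator A x *\<^sub>R g x)"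
    using assms(2) by (auto simp: indicator_def)
  have e2: "(\<lambda>x. indicator A x *\<^sub>R (\<bar>f x\<bar> powr q)) = (\<lambda>x. indicator A x *\<^sub>R (\<bar>g x\<bar> powr q))"
    using assms(2) by (auto simp: indicator_def)
  show ?thesis using assms(1) unfolding Lq_on_def set_borel_measurable_def set_integrable_def e1 e2 .
qed

lemma Lq_restrict:
  assumes "Lq_on q UNIV f" "A \<in> sets lebesgue"
  shows "Lq_on q A f"
  using assms integrable_mult_indicator[OF assms(2), of "\<lambda>x. \<bar>f x\<bar> powr q"]
  unfolding Lq_UNIV_iff Lq_on_def set_borel_measurable_def set_integrable_def
  by auto

lemma Lq_extend:
  assumes "Lq_on q A f" "q > 0"
  shows "Lq_on q UNIV (\<lambda>x. indicator A x * f x)"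
proof -
  have "(\<lambda>x. \<bar>indicator A x * f x\<bar> powr q) = (\<lambda>x. indicator A x *\<^sub>R (\<bar>f x\<bar> powr q))"
    using assms(2) by (auto simp: indicator_def)
  then show ?thesis using assms(1) unfolding Lq_UNIV_iff Lq_on_def set_borel_measurable_def set_integrable_def
    by simp
qed

lemma Lq_transl:
  assumes "Lq_on q UNIV f"
  shows "Lq_on q UNIV (\<lambda>x. f (x + c))"
proof -
  have m: "f \<in> borel_measurable lebesgue" and i: "integrable lebesgue (\<lambda>x. \<bar>f x\<bar> powr q)"
    using assms by (auto simp: Lq_UNIV_iff)
  have "(\<lambda>x. f (c + 1 *\<^sub>R x)) \<in> borel_measurable lebesgue"
    by (rule borel_measurable_affine[OF m]) simp
  moreover have "integrable lebesgue (\<lambda>x. \<bar>f (c + 1 * x)\<bar> powr q)"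
    using lebesgue_integrable_real_affine[OF i, of 1 c] by simp
  ultimately show ?thesis by (simp add: Lq_UNIV_iff add.commute)
qed

lemma powr_sum_le:
  fixes a b q :: real
  assumes "q > 0"
  shows "\<bar>a + b\<bar> powr q \<le> 2 powr q * (\<bar>a\<bar> powr q + \<bar>b\<bar> powr q)"
proof -
  have "\<bar>a + b\<bar> \<le> 2 * max \<bar>a\<bar> \<bar>b\<bar>" by auto
  then have "\<bar>a + b\<bar> powr q \<le> (2 * max \<bar>a\<bar> \<bar>b\<bar>) powr q"
    using assms by (intro powr_mono2) auto
  also have "\<dots> = 2 powr q * (max \<bar>a\<bar> \<bar>b\<bar>) powr q"
    by (simp add: powr_mult)
  also have "(max \<bar>a\<bar> \<bar>b\<bar>) powr q \<le> \<bar>a\<bar> powr q + \<bar>b\<bar> powr q"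
    by (cases "\<bar>a\<bar> \<le> \<bar>b\<bar>") (auto simp: max_def)
  finally show ?thesis by (simp add: mult_left_mono)
qed

lemma Lq_add:
  assumes "Lq_on q UNIV f" "Lq_on q UNIV g" "q > 0"
  shows "Lq_on q UNIV (\<lambda>x. f x + g x)"
proof -
  have [measurable]: "f \<in> borel_measurable lebesgue" "g \<in> borel_measurable lebesgue"
    and i: "integrable lebesgue (\<lambda>x. \<bar>f x\<bar> powr q)" "integrable lebesgue (\<lambda>x. \<bar>g x\<bar> powr q)"
    using assms by (auto simp: Lq_UNIV_iff)
  have ii: "integrable lebesgue (\<lambda>x. 2 powr q * (\<bar>f x\<bar> powr q + \<bar>g x\<bar> powr q))"
    using i by auto
  have "integrable lebesgue (\<lambda>x. \<bar>f x + g x\<bar> powr q)"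
    by (rule Bochner_Integration.integrable_bound[OF ii]) (auto intro!: AE_I2 order.trans[OF _ abs_ge_self] powr_sum_le assms(3))
  then show ?thesis by (simp add: Lq_UNIV_iff)
qed

lemma Lq_scale:
  assumes "Lq_on q UNIV f" "q > 0"
  shows "Lq_on q UNIV (\<lambda>x. c * f x)"
proof -
  have [measurable]: "f \<in> borel_measurable lebesgue"
    and i: "integrable lebesgue (\<lambda>x. \<bar>f x\<bar> powr q)"
    using assms by (auto simp: Lq_UNIV_iff)
  have "(\<lambda>x. \<bar>c * f x\<bar> powr q) = (\<lambda>x. \<bar>c\<bar> powr q * \<bar>f x\<bar> powr q)"
    by (simp add: abs_mult powr_mult)
  then show ?thesis using i by (simp add: Lq_UNIV_iff)
qed

lemma abs_le_powr: "q \<ge> 1 \<Longrightarrow> \<bar>x::real\<bar> \<le> 1 + \<bar>x\<bar> powr q"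
proof (cases "\<bar>x\<bar> \<le> 1")
  case False
  assume q: "q \<ge> 1"
  have "\<bar>x\<bar> = \<bar>x\<bar> powr 1" using False by simp
  also have "\<dots> \<le> \<bar>x\<bar> powr q" using False q by (intro powr_mono) auto
  finally show ?thesis by simp
next
  case True
  have "0 \<le> \<bar>x\<bar> powr q" by simp
  with True show ?thesis by linarith
qed

lemma Lq_int:
  assumes "Lq_on q {a..b} f" "q \<ge> 1"
  shows "set_integrable lebesgue {a..b} f"
proof -
  have m[measurable]: "(\<lambda>x. indicator {a..b} x *\<^sub>R f x) \<in> borel_measurable lebesgue"
    and i: "integrable lebesgue (\<lambda>x. indicator {a..b} x *\<^sub>R (\<bar>f x\<bar> powr q))"
    using assms by (auto simp: Lq_on_def set_integrable_def set_borel_measurable_def)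
  have "integrable lebesgue (indicator {a..b} :: real \<Rightarrow> real)"
    using emeasure_lborel_cbox_finite[of a b] by (simp add: integrable_indicator_iff cbox_interval)
  then have "integrable lebesgue (\<lambda>x. indicator {a..b} x + indicator {a..b} x *\<^sub>R (\<bar>f x\<bar> powr q))"
    using i by auto
  then have "integrable lebesgue (\<lambda>x. indicator {a..b} x *\<^sub>R f x)"
    by (rule Bochner_Integration.integrable_bound[OF _ m]) (auto intro!: AE_I2 abs_le_powr assms(2) simp: indicator_def)
  then show ?thesis by (simp add: set_integrable_def)
qed

lemma Lq_bdd:
  assumes "set_borel_measurable lebesgue {a..b} f" "\<And>x. x \<in> {a..b} \<Longrightarrow> \<bar>f x\<bar> \<le> K" "q > 0"
  shows "Lq_on q {a..b} f"
proof -
  have m[measurable]: "(\<lambda>x. indicator {a..b} x *\<^sub>R f x) \<in> borel_measurable lebesgue"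
    using assms(1) by (simp add: set_borel_measurable_def)
  have m2: "(\<lambda>x. \<bar>indicator {a..b} x *\<^sub>R f x\<bar> powr q) \<in> borel_measurable lebesgue"
    by measurable
  have e: "(\<lambda>x. indicator {a..b} x *\<^sub>R (\<bar>f x\<bar> powr q)) = (\<lambda>x. \<bar>indicator {a..b} x *\<^sub>R f x\<bar> powr q)"
    using assms(3) by (auto simp: indicator_def)
  have "integrable lebesgue (\<lambda>x. indicator {a..b} x *\<^sub>R (K powr q))"
    using emeasure_lborel_cbox_finite[of a b] by (simp add: integrable_indicator_iff cbox_interval)
  then have "integrable lebesgue (\<lambda>x. \<bar>indicator {a..b} x *\<^sub>R f x\<bar> powr q)"
    by (rule Bochner_Integration.integrable_bound[OF _ m2]) (use assms(3) in \<open>auto intro!: AE_I2 powr_mono2 assms(2) simp del: indicator_simps simp: indicator_def\<close>)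
  then show ?thesis using assms(1) unfolding Lq_on_def set_integrable_def e by blast
qed


lemma AE_transl:
  assumes "AE x in lebesgue. P x"
  shows "AE x in lebesgue. P (x + c)"
proof -
  from assms obtain N where N: "N \<in> null_sets lebesgue" "{x \<in> space lebesgue. \<not> P x} \<subseteq> N"
    unfolding eventually_ae_filter by auto
  have "negligible N" using N negligible_iff_null_sets by blast
  then have "negligible ((+) (-c) ` N)" by (rule negligible_translation)
  then have nn: "(+) (-c) ` N \<in> null_sets lebesgue" by (simp add: negligible_iff_null_sets)
  have "{x \<in> space lebesgue. \<not> P (x + c)} \<subseteq> (+) (-c) ` N"
  proof
    fix x assume "x \<in> {x \<in> space lebesgue. \<not> P (x + c)}"
    then have "x + c \<in> N" using N(2) by auto
    then show "x \<in> (+) (-c) ` N" by (auto intro!: image_eqI[of _ _ "x + c"])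
  qed
  then show ?thesis by (rule AE_I'[OF nn])
qed

lemma LINT_reflect:
  "(LINT \<tau>:{0..pi}|lebesgue. h (t - \<tau>)) = (LINT x:{t-pi..t}|lebesgue. (h x :: real))"
proof -
  have "(LINT x:{t-pi..t}|lebesgue. h x) = \<bar>-1\<bar> *\<^sub>R (\<integral>x. indicator {t-pi..t} (t + -1 * x) *\<^sub>R h (t + -1 * x) \<partial>lebesgue)"
    unfolding set_lebesgue_integral_def
    by (rule lebesgue_integral_real_affine) simp
  also have "\<dots> = (LINT \<tau>:{0..pi}|lebesgue. h (t - \<tau>))"
    unfolding set_lebesgue_integral_def
    by (auto intro!: Bochner_Integration.integral_cong simp: indicator_def)
  finally show ?thesis by simp
qed

lemma integrable_reflect_set:
  assumes "integrable lebesgue (h :: real \<Rightarrow> real)"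
  shows "set_integrable lebesgue {0..pi} (\<lambda>\<tau>. h (t - \<tau>))"
proof -
  have "integrable lebesgue (\<lambda>x. h (t + -1 * x))"
    by (rule lebesgue_integrable_real_affine[OF assms]) simp
  then show ?thesis unfolding set_integrable_def
    by (intro integrable_mult_indicator) auto
qed

lemma core:
  fixes w :: "real \<Rightarrow> real"
  assumes wi: "integrable lebesgue w" and w0: "\<And>t. t \<le> 0 \<Longrightarrow> w t = 0"
  and eq: "AE t in lebesgue. t \<in> {0..T} \<longrightarrow> w t = a1 * w (t-1) + a2 * w (t-pi) + (LINT \<tau>:{0..pi}|lebesgue. w (t-\<tau>))"
  shows "AE t in lebesgue. t \<le> T \<longrightarrow> w t = 0"
proof -
  have wa: "integrable lebesgue (\<lambda>x. \<bar>w x\<bar>)" using wi by auto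
  have step: "AE t in lebesgue. t \<le> s + 1/2 \<and> t \<le> T \<longrightarrow> w t = 0"
    if s0: "0 \<le> s" and P: "AE t in lebesgue. t \<le> s \<and> t \<le> T \<longrightarrow> w t = 0" for s
  proof -
    define J where "J = {s..min (s+1/2) T}"
    define M where "M = (\<integral>x. indicator J x * \<bar>w x\<bar> \<partial>lebesgue)"
    have Ji: "integrable lebesgue (\<lambda>x. indicator J x * \<bar>w x\<bar>)"
      using integrable_mult_indicator[OF _ wa, of J] by (simp add: J_def)
    have M0: "0 \<le> M" unfolding M_def by (rule integral_nonneg_AE) auto
    have P1: "AE t in lebesgue. t \<le> s + 1/2 \<and> t \<le> T \<longrightarrow> w (t-1) = 0"
      using AE_transl[OF P, of "-1"] by eventually_elim auto
    have P2: "AE t in lebesgue. t \<le> s + 1/2 \<and> t \<le> T \<longrightarrow> w (t-pi) = 0"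
      using AE_transl[OF P, of "-pi"] by eventually_elim (use pi_gt3 in auto)
    have bound: "AE t in lebesgue. t \<in> J \<longrightarrow> \<bar>w t\<bar> \<le> M"
      using eq P1 P2
    proof eventually_elim
      case (elim t)
      show ?case
      proof
        assume tJ: "t \<in> J"
        then have t0T: "t \<in> {0..T}" "t \<le> s + 1/2" using s0 by (auto simp: J_def)
        then have "w t = (LINT \<tau>:{0..pi}|lebesgue. w (t-\<tau>))" using elim by auto
        also have "\<dots> = (LINT x:{t-pi..t}|lebesgue. w x)" by (rule LINT_reflect)
        finally have "\<bar>w t\<bar> \<le> (\<integral>x. \<bar>indicator {t-pi..t} x *\<^sub>R w x\<bar> \<partial>lebesgue)"
          unfolding set_lebesgue_integral_def by (metis integral_abs_bound)
        also have "\<dots> \<le> M" unfolding M_def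
        proof (rule integral_mono_AE)
          show "integrable lebesgue (\<lambda>x. \<bar>indicator {t-pi..t} x *\<^sub>R w x\<bar>)"
            using integrable_mult_indicator[OF _ wa, of "{t-pi..t}"] by (simp add: abs_mult)
          show "integrable lebesgue (\<lambda>x. indicator J x * \<bar>w x\<bar>)" by (rule Ji)
          show "AE x in lebesgue. \<bar>indicator {t-pi..t} x *\<^sub>R w x\<bar> \<le> indicator J x * \<bar>w x\<bar>"
            using P
          proof eventually_elim
            case (elim x)
            show ?case
            proof (cases "x \<in> {t-pi..t}")
              case True
              show ?thesis
              proof (cases "x \<le> s")
                case True
                then have "w x = 0" using elim \<open>x \<in> {t-pi..t}\<close> t0T by auto
                then show ?thesis by simp
              next
                case False
                then have "x \<in> J" using True t0T by (auto simp: J_def)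
                then show ?thesis using True by simp
              qed
            qed (simp add: indicator_def)
          qed
        qed
        finally show "\<bar>w t\<bar> \<le> M" .
      qed
    qed
    have I2: "integrable lebesgue (\<lambda>x. indicator {s..s+1/2} x * M)"
      using emeasure_lborel_cbox_finite[of s "s+1/2"]
      by (intro integrable_mult_left) (simp add: integrable_indicator_iff cbox_interval)
    have A2: "AE x in lebesgue. indicator J x * \<bar>w x\<bar> \<le> indicator {s..s+1/2} x * M"
      using bound
    proof eventually_elim
      case (elim x)
      show ?case using elim M0 by (auto simp: indicator_def J_def)
    qed
    have X: "(\<integral>x. indicator J x * \<bar>w x\<bar> \<partial>lebesgue) \<le> (\<integral>x. indicator {s..s+1/2} x * M \<partial>lebesgue)"
      by (rule integral_mono_AE[OF Ji I2 A2])
    have "M \<le> (\<integral>x. indicator {s..s+1/2} x * M \<partial>lebesgue)"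
      using X unfolding M_def[symmetric] .
    also have "\<dots> = M / 2" by simp
    finally have "M = 0" using M0 by simp
    then have Z: "AE x in lebesgue. indicator J x * \<bar>w x\<bar> = 0"
      unfolding M_def by (subst (asm) integral_nonneg_eq_0_iff_AE[OF Ji]) auto
    show ?thesis using Z P
    proof eventually_elim
      case (elim t)
      show ?case
      proof
        assume t: "t \<le> s + 1/2 \<and> t \<le> T"
        show "w t = 0"
        proof (cases "t \<le> s")
          case True then show ?thesis using elim t by auto
        next
          case False
          then have "t \<in> J" using t by (auto simp: J_def)
          then show ?thesis using elim by simp
        qed
      qed
    qed
  qed
  have all: "AE t in lebesgue. t \<le> real n / 2 \<and> t \<le> T \<longrightarrow> w t = 0" for n :: nat
  proof (induction n)
    case 0 then show ?case using w0 by (auto intro!: AE_I2)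
  next
    case (Suc n)
    have "AE t in lebesgue. t \<le> real n / 2 + 1/2 \<and> t \<le> T \<longrightarrow> w t = 0"
      by (rule step[OF _ Suc]) simp
    then show ?case by (simp add: add_divide_distrib add.commute)
  qed
  obtain n :: nat where n: "2 * T \<le> real n" using real_arch_simple by blast
  show ?thesis using all[of n] by eventually_elim (use n in auto)
qed


lemma uniq:
  assumes q: "q \<ge> 1" and T: "T \<ge> 0"
    and s1: "is_solution q a1 a2 b T phi u y1" and s2: "is_solution q a1 a2 b T phi u y2"
  shows "AE t in lebesgue. t \<in> {-pi..T} \<longrightarrow> y1 t = y2 t"
proof -
  from s1 have L1: "Lq_on q {-pi..T} y1" and p1: "\<forall>t\<in>{-pi..0}. y1 t = phi t"
    and e1: "AE t in lebesgue. t \<in> {0..T} \<longrightarrow>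
        y1 t = a1 * y1 (t - 1) + a2 * y1 (t - pi) + (LINT \<tau>:{0..pi}|lebesgue. y1 (t - \<tau>)) + b * u t"
    by (auto simp: is_solution_def)
  from s2 have L2: "Lq_on q {-pi..T} y2" and p2: "\<forall>t\<in>{-pi..0}. y2 t = phi t"
    and e2: "AE t in lebesgue. t \<in> {0..T} \<longrightarrow>
        y2 t = a1 * y2 (t - 1) + a2 * y2 (t - pi) + (LINT \<tau>:{0..pi}|lebesgue. y2 (t - \<tau>)) + b * u t"
    by (auto simp: is_solution_def)
  define h1 where "h1 t = indicator {-pi..T} t * y1 t" for t
  define h2 where "h2 t = indicator {-pi..T} t * y2 t" for t
  have i1: "integrable lebesgue h1" using Lq_int[OF L1 q] by (simp add: set_integrable_def h1_def[abs_def])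
  have i2: "integrable lebesgue h2" using Lq_int[OF L2 q] by (simp add: set_integrable_def h2_def[abs_def])
  define w where "w t = h1 t - h2 t" for t
  have wi: "integrable lebesgue w" using i1 i2 by (simp add: w_def[abs_def])
  have w0: "w t = 0" if "t \<le> 0" for t
    using that p1 p2 by (cases "t < -pi") (auto simp: w_def h1_def h2_def indicator_def)
  have eq: "AE t in lebesgue. t \<in> {0..T} \<longrightarrow> w t = a1 * w (t-1) + a2 * w (t-pi) + (LINT \<tau>:{0..pi}|lebesgue. w (t-\<tau>))"
    using e1 e2
  proof eventually_elim
    case (elim t)
    show ?case
    proof
      assume t: "t \<in> {0..T}"
      have a: "h1 (t-1) = y1 (t-1)" "h2 (t-1) = y2 (t-1)" "h1 (t-pi) = y1 (t-pi)" "h2 (t-pi) = y2 (t-pi)"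
        "h1 t = y1 t" "h2 t = y2 t"
        using t pi_gt3 by (auto simp: h1_def h2_def indicator_def)
      have b1: "(LINT \<tau>:{0..pi}|lebesgue. y1 (t - \<tau>)) = (LINT \<tau>:{0..pi}|lebesgue. h1 (t - \<tau>))"
        using t by (intro set_lebesgue_integral_cong) (auto simp: h1_def indicator_def)
      have b2: "(LINT \<tau>:{0..pi}|lebesgue. y2 (t - \<tau>)) = (LINT \<tau>:{0..pi}|lebesgue. h2 (t - \<tau>))"
        using t by (intro set_lebesgue_integral_cong) (auto simp: h2_def indicator_def)
      have c: "(LINT \<tau>:{0..pi}|lebesgue. w (t - \<tau>)) = (LINT \<tau>:{0..pi}|lebesgue. h1 (t - \<tau>)) - (LINT \<tau>:{0..pi}|lebesgue. h2 (t - \<tau>))"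
        unfolding w_def
        by (rule set_integral_diff(2)[OF integrable_reflect_set[OF i1] integrable_reflect_set[OF i2]])
      show "w t = a1 * w (t-1) + a2 * w (t-pi) + (LINT \<tau>:{0..pi}|lebesgue. w (t-\<tau>))"
        using elim t c a b1 b2 unfolding w_def by (simp add: algebra_simps)
    qed
  qed
  have "AE t in lebesgue. t \<le> T \<longrightarrow> w t = 0" by (rule core[OF wi w0 eq])
  then show ?thesis
    by eventually_elim (auto simp: w_def h1_def h2_def indicator_def)
qed


theorem proposition16:
  fixes a1 a2 b q :: real
  assumes "a1 \<noteq> 0" and "a2 \<noteq> 0" and "b \<noteq> 0" and "q \<ge> 1"
  shows "\<forall>T > 2 * pi. Lq_approx_controllable q a1 a2 b T"
proof (intro allI impI)
  fix T :: real assume T: "T > 2 * pi"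
  have q0: "q > 0" using assms(4) by simp
  have Tpi: "T - pi > 0" using T pi_gt3 by simp
  show "Lq_approx_controllable q a1 a2 b T"
    unfolding Lq_approx_controllable_def
  proof (intro allI impI)
    fix phi psi :: "real \<Rightarrow> real" and \<epsilon> :: real
    assume ph: "Lq_on q {-pi..0} phi" and ps: "Lq_on q {-pi..0} psi" and e: "\<epsilon> > 0"
    define y where "y t = indicator {-pi..0} t * phi t + indicator {T-pi..T} t * psi (t - T)" for t
    define I where "I t = (LINT \<tau>:{0..pi}|lebesgue. y (t - \<tau>))" for t
    define u where "u t = (y t - a1 * y (t-1) - a2 * y (t-pi) - I t) / b" for t
    have X: "Lq_on q UNIV (\<lambda>t. indicator {T-pi..T} t * psi (t - T))"
      by (rule Lq_cong[OF Lq_transl[OF Lq_extend[OF ps q0], of "-T"]]) (auto simp: indicator_def)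
    have LyU: "Lq_on q UNIV y"
      unfolding y_def[abs_def] by (rule Lq_add[OF Lq_extend[OF ph q0] X q0])
    have yT: "Lq_on q {-pi..T} y" by (rule Lq_restrict[OF LyU]) simp
    have yz: "y x = indicator {-pi..T} x *\<^sub>R y x" for x
      using Tpi by (auto simp: y_def indicator_def)
    have yint: "integrable lebesgue y"
    proof -
      have yeq: "(\<lambda>x. indicator {-pi..T} x *\<^sub>R y x) = y" by (rule ext, rule yz[symmetric])
      show ?thesis using Lq_int[OF yT assms(4)] unfolding set_integrable_def yeq .
    qed
    have yhk: "y integrable_on {a..c}" for a c
      using integrable_on_subinterval[OF integrable_on_lebesgue[OF yint], of a c] by simp
    define G where "G x = integral {-2*pi..x} y" for x
    have Gc: "continuous_on {-2*pi..T} G"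
      unfolding G_def[abs_def] by (rule indefinite_integral_continuous_1[OF yhk])
    have IG: "I t = G t - G (t - pi)" if t: "t \<in> {0..T}" for t
    proof -
      have "I t = (LINT x:{t-pi..t}|lebesgue. y x)" unfolding I_def by (rule LINT_reflect)
      also have "\<dots> = integral {t-pi..t} y"
        by (rule set_lebesgue_integral_eq_integral(2))
           (unfold set_integrable_def, rule integrable_mult_indicator[OF _ yint], simp)
      also have "\<dots> = G t - G (t - pi)"
        using Henstock_Kurzweil_Integration.integral_combine[of "-2*pi" "t-pi" t y] t yhk by (simp add: G_def)
      finally show ?thesis .
    qed
    have Ic: "continuous_on {0..T} I"
    proof -
      have "continuous_on {0..T} (\<lambda>t. G t - G (t - pi))"
      proof (intro continuous_on_diff)
        show "continuous_on {0..T} G" by (rule continuous_on_subset[OF Gc]) (use pi_gt3 in auto)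
        show "continuous_on {0..T} (\<lambda>t. G (t - pi))"
          by (rule continuous_on_compose2[OF Gc]) (auto intro!: continuous_intros)
      qed
      then show ?thesis by (rule continuous_on_eq) (simp add: IG)
    qed
    have Im: "set_borel_measurable lebesgue {0..T} I"
    proof -
      have "I \<in> borel_measurable (lebesgue_on {0..T})"
        by (rule continuous_imp_measurable_on_sets_lebesgue[OF Ic]) simp
      then show ?thesis unfolding set_borel_measurable_def
        using borel_measurable_restrict_space_iff[of "{0..T}" lebesgue I] by simp
    qed
    obtain K where K: "\<And>x. x \<in> {0..T} \<Longrightarrow> \<bar>I x\<bar> \<le> K"
      using compact_imp_bounded[OF compact_continuous_image[OF Ic compact_Icc]]
      unfolding bounded_real by (metis image_eqI)
    have LI: "Lq_on q {0..T} I" by (rule Lq_bdd[OF Im K q0])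
    have LuU: "Lq_on q UNIV (\<lambda>t. (1/b) * (y t + ((-a1) * y (t + -1) + ((-a2) * y (t + -pi)
                  + (-1) * (indicator {0..T} t * I t)))))"
      by (intro Lq_scale Lq_add Lq_transl LyU q0 Lq_extend[OF LI q0])
    have Lu: "Lq_on q {0..T} u"
      by (rule Lq_cong[OF Lq_restrict[OF LuU]]) (auto simp: u_def field_simps)
    have ysol: "is_solution q a1 a2 b T phi u y"
      unfolding is_solution_def
    proof (intro conjI yT ballI AE_I2 impI)
      fix t assume "t \<in> {-pi..0}"
      then show "y t = phi t" using Tpi by (auto simp: y_def indicator_def)
    next
      fix t show "y t = a1 * y (t - 1) + a2 * y (t - pi) + (LINT \<tau>:{0..pi}|lebesgue. y (t - \<tau>)) + b * u t"
        using assms(3) by (simp add: u_def I_def)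
    qed
    show "\<exists>u. Lq_on q {0..T} u \<and> (\<exists>y. is_solution q a1 a2 b T phi u y) \<and>
             (\<forall>y. is_solution q a1 a2 b T phi u y \<longrightarrow>
                  Lq_norm q {-pi..0} (\<lambda>\<theta>. y (T + \<theta>) - psi \<theta>) < \<epsilon>)"
    proof (intro exI conjI allI impI)
      show "Lq_on q {0..T} u" by (rule Lu)
      show "is_solution q a1 a2 b T phi u y" by (rule ysol)
      fix y' assume s': "is_solution q a1 a2 b T phi u y'"
      have U: "AE t in lebesgue. t \<in> {-pi..T} \<longrightarrow> y' t = y t"
        by (rule uniq[OF assms(4) _ s' ysol]) (use Tpi pi_gt3 in auto)
      have "AE \<theta> in lebesgue. indicator {-pi..0} \<theta> *\<^sub>R (\<bar>y' (T + \<theta>) - psi \<theta>\<bar> powr q) = 0"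
        using AE_transl[OF U, of T]
      proof eventually_elim
        case (elim \<theta>)
        show ?case
        proof (cases "\<theta> \<in> {-pi..0}")
          case True
          then have "y' (T + \<theta>) = y (T + \<theta>)" using elim Tpi by (auto simp: add.commute)
          also have "\<dots> = psi \<theta>" using True Tpi by (auto simp: y_def indicator_def)
          finally show ?thesis by simp
        qed simp
      qed
      then have "(LINT \<theta>:{-pi..0}|lebesgue. \<bar>y' (T + \<theta>) - psi \<theta>\<bar> powr q) = 0"
        unfolding set_lebesgue_integral_def by (rule integral_eq_zero_AE)
      then show "Lq_norm q {-pi..0} (\<lambda>\<theta>. y' (T + \<theta>) - psi \<theta>) < \<epsilon>"
        using e by (simp add: Lq_norm_def)
    qed
  qed
qed

end
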